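(* Let $\alpha\in(0,1)$, $\sigma=1-\alpha/2$, and let $0=t_0<t_1<\cdots$ be a time mesh with $\tau_j=t_j-t_{j-1}$, $\rho_j=\tau_j/\tau_{j-1}$, such that for every $k\ge2$: $\rho_k>\rho_*$, $\rho_{k+1}>\rho_*$, and if $\rho_k<\eta$ then $\rho_{k+1}\le \rho_k^2(1+\rho_k)/(1-3\rho_k^2(1+\rho_k))$. Let the lower-triangular entries $[\mathbf M]_{k,j}$ be as defined in the context. Then: (Q1) for all $1\le j\le k$, $$[\mathbf M]_{k,j}\ge\frac{\rho_*}{(1+\rho_* )\tau_j}\int_{t_{j-1}}^{\min\{t_j,t_k^*\}}(t_k^*-s)^{-\alpha}\,\mathrm ds;$$ (Q2) for all $2\le j\le k-1$, $$[\mathbf M]_{k,j}-[\mathbf M]_{k,j-1}\ge\frac{\alpha\tau_j}{\tau_j+\tau_{j+1}}\int_0^1(\tau_j+\tau_{j+1}-s\tau_j)(1-s)(t_k^*-t_{j-1}-s\tau_j)^{-\alpha-1}\,\mathrm ds,$$ and for all $k\ge2$, $[\mathbf M]_{k,k}-[\mathbf M]_{k,k-1}\ge\dfrac{\alpha}{2(1-\alpha)(\sigma\tau_k)^\alpha}$; (Q3) if moreover $\rho_k\ge\eta$ for all $k\ge2$, then $\frac{1-\alpha}{\sigma}[\mathbf M]_{k,k}-[\mathbf M]_{k,k-1}\ge0$ for all $k\ge2$.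
   Context: Notation: $t_k^*=t_{k-1}+\sigma\tau_k$. For $k\ge2$ and $1\le j\le k-1$ define $$a_j^k=\int_0^1\frac{-2\tau_j(1-\theta)-\tau_{j+1}}{(\tau_j+\tau_{j+1})\,(t_k^*-t_{j-1}-\theta\tau_j)^\alpha}\,\mathrm d\theta,\qquad c_j^k=\int_0^1\frac{\tau_j^2(2\theta-1)}{\tau_{j+1}(\tau_j+\tau_{j+1})\,(t_k^*-t_{j-1}-\theta\tau_j)^\alpha}\,\mathrm d\theta,$$ and $d_j^k=c_{j-1}^k-a_j^k$ for $2\le j\le k-1$. The entries $[\mathbf M]_{k,j}$, $1\le j\le k$, are: $[\mathbf M]_{1,1}=\frac{\sigma^{1-\alpha}}{(1-\alpha)\tau_1^\alpha}$; for $k\ge2$, $[\mathbf M]_{k,1}=-a_1^k$, $[\mathbf M]_{k,j}=d_j^k$ for $2\le j\le k-1$, and $[\mathbf M]_{k,k}=c_{k-1}^k+\frac{\sigma^{1-\alpha}}{(1-\alpha)\tau_k^\alpha}$. $\rho_*\approx 0.356341$ is the unique positive root of $\rho(1+\rho)=1-3\rho^2(1+\rho)$, and $\eta\approx0.475329$ is the unique positive root of $1-3\rho^2(1+\rho)=0$. *)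

theory Defs
  imports "HOL-Analysis.Analysis"
begin

definition rho_star :: real where
  "rho_star = (THE r. r > 0 \<and> r * (1 + r) = 1 - 3 * r^2 * (1 + r))"

definition eta :: real where
  "eta = (THE r. r > 0 \<and> 1 - 3 * r^2 * (1 + r) = 0)"

definition sigma :: "real \<Rightarrow> real" where
  "sigma \<alpha> = 1 - \<alpha> / 2"

definition tau :: "(nat \<Rightarrow> real) \<Rightarrow> nat \<Rightarrow> real" where
  "tau t j = t j - t (j - 1)"

definition rho :: "(nat \<Rightarrow> real) \<Rightarrow> nat \<Rightarrow> real" where
  "rho t j = tau t j / tau t (j - 1)"

definition tstar :: "(nat \<Rightarrow> real) \<Rightarrow> real \<Rightarrow> nat \<Rightarrow> real" where
  "tstar t \<alpha> k = t (k - 1) + sigma \<alpha> * tau t k"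

definition coef_a :: "(nat \<Rightarrow> real) \<Rightarrow> real \<Rightarrow> nat \<Rightarrow> nat \<Rightarrow> real" where
  "coef_a t \<alpha> k j = integral {0..1} (\<lambda>\<theta>.
     (- 2 * tau t j * (1 - \<theta>) - tau t (j + 1)) /
     ((tau t j + tau t (j + 1)) * (tstar t \<alpha> k - t (j - 1) - \<theta> * tau t j) powr \<alpha>))"

definition coef_c :: "(nat \<Rightarrow> real) \<Rightarrow> real \<Rightarrow> nat \<Rightarrow> nat \<Rightarrow> real" where
  "coef_c t \<alpha> k j = integral {0..1} (\<lambda>\<theta>.
     (tau t j ^ 2 * (2 * \<theta> - 1)) /
     (tau t (j + 1) * (tau t j + tau t (j + 1)) * (tstar t \<alpha> k - t (j - 1) - \<theta> * tau t j) powr \<alpha>))"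

definition coef_d :: "(nat \<Rightarrow> real) \<Rightarrow> real \<Rightarrow> nat \<Rightarrow> nat \<Rightarrow> real" where
  "coef_d t \<alpha> k j = coef_c t \<alpha> k (j - 1) - coef_a t \<alpha> k j"

definition Mmat :: "(nat \<Rightarrow> real) \<Rightarrow> real \<Rightarrow> nat \<Rightarrow> nat \<Rightarrow> real" where
  "Mmat t \<alpha> k j =
    (if k = 1 \<and> j = 1 then sigma \<alpha> powr (1 - \<alpha>) / ((1 - \<alpha>) * tau t 1 powr \<alpha>)
     else if 2 \<le> k \<and> j = 1 then - coef_a t \<alpha> k 1
     else if 2 \<le> k \<and> 2 \<le> j \<and> j \<le> k - 1 then coef_d t \<alpha> k j
     else if 2 \<le> k \<and> j = k then coef_c t \<alpha> k (k - 1) + sigma \<alpha> powr (1 - \<alpha>) / ((1 - \<alpha>) * tau t k powr \<alpha>)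
     else 0)"

end

theory Submission
  imports Defs
begin
lemma poly_int:
  "((\<lambda>\<theta>::real. a + b*\<theta> + c*\<theta>^2) has_integral (a + b/2 + c/3)) {0..1}"
proof -
  have "((\<lambda>\<theta>::real. a + b*\<theta> + c*\<theta>^2) has_integral
        ((\<lambda>x. a*x + b/2*x^2 + c/3*x^3) 1 - (\<lambda>x. a*x + b/2*x^2 + c/3*x^3) 0)) {0..1}"
    apply (rule fundamental_theorem_of_calculus)
     apply simp
    apply (simp only: has_real_derivative_iff_has_vector_derivative[symmetric])
    apply (rule derivative_eq_intros refl)+
    apply (simp add: power2_eq_square)
    done
  then show ?thesis by simp
qed

lemma int_I1:
  assumes "continuous_on {0..1::real} (e::real\<Rightarrow>real)"
  shows "((\<lambda>\<theta>. \<theta> * e \<theta>) has_integral integral {0..1} (\<lambda>\<theta>. \<theta> * e \<theta>)) {0..1}"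
  by (intro integrable_integral integrable_continuous_interval continuous_intros assms)

lemma int_I0:
  assumes "continuous_on {0..1::real} (e::real\<Rightarrow>real)"
  shows "(e has_integral integral {0..1} e) {0..1}"
  using integrable_integral[OF integrable_continuous_interval[OF assms]] .

lemma int_lin:
  assumes "continuous_on {0..1::real} (e::real\<Rightarrow>real)"
  shows "((\<lambda>\<theta>. u * e \<theta> + v * (\<theta> * e \<theta>)) has_integral
     (u * integral {0..1} e + v * integral {0..1} (\<lambda>\<theta>. \<theta> * e \<theta>))) {0..1}"
  by (intro has_integral_add has_integral_mult_right int_I0 int_I1 assms)

lemma lemA:
  assumes c: "continuous_on {0..1::real} (e::real\<Rightarrow>real)"
    and m: "\<And>x y. 0 \<le> x \<Longrightarrow> x \<le> y \<Longrightarrow> y \<le> 1 \<Longrightarrow> e x \<le> e y"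
  shows "2 * integral {0..1} (\<lambda>\<theta>. \<theta> * e \<theta>) - integral {0..1} e \<ge> 0"
proof -
  have "(-e (1/2)) + (2 * e (1/2)) / 2 + 0 / 3 \<le> (-1) * integral {0..1} e + 2 * integral {0..1} (\<lambda>\<theta>. \<theta> * e \<theta>)"
  proof (rule has_integral_le[OF poly_int int_lin[OF c]])
    fix x :: real assume x: "x \<in> {0..1}"
    show "- e (1 / 2) + 2 * e (1 / 2) * x + 0 * x\<^sup>2 \<le> - 1 * e x + 2 * (x * e x)"
    proof (cases "x \<le> 1/2")
      case True
      with x m[of x "1/2"] have "e x \<le> e (1/2)" by auto
      from mult_left_mono[OF this, of "1 - 2*x"] True show ?thesis by (simp add: algebra_simps)
    next
      case False
      with x m[of "1/2" x] have "e (1/2) \<le> e x" by auto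
      from mult_left_mono[OF this, of "2*x - 1"] False show ?thesis by (simp add: algebra_simps)
    qed
  qed
  then show ?thesis by simp
qed

lemma lemB:
  assumes c: "continuous_on {0..1::real} (e::real\<Rightarrow>real)"
    and m: "\<And>x y. 0 \<le> x \<Longrightarrow> x \<le> y \<Longrightarrow> y \<le> 1 \<Longrightarrow> e y - e x \<le> S * (y - x)"
  shows "2 * integral {0..1} (\<lambda>\<theta>. \<theta> * e \<theta>) - integral {0..1} e \<le> S / 6"
proof -
  have "(-1) * integral {0..1} e + 2 * integral {0..1} (\<lambda>\<theta>. \<theta> * e \<theta>) \<le>
        (S/2 - e (1/2)) + (2 * e (1/2) - 2 * S) / 2 + (2 * S) / 3"
  proof (rule has_integral_le[OF int_lin[OF c] poly_int])
    fix x :: real assume x: "x \<in> {0..1}"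
    show "- 1 * e x + 2 * (x * e x) \<le> (S/2 - e (1/2)) + (2 * e (1/2) - 2 * S) * x + (2 * S) * x\<^sup>2"
    proof (cases "x \<le> 1/2")
      case True
      with x m[of x "1/2"] have "e (1/2) - e x \<le> S * (1/2 - x)" by auto
      from mult_left_mono[OF this, of "1 - 2*x"] True show ?thesis
        by (simp add: algebra_simps power2_eq_square)
    next
      case False
      with x m[of "1/2" x] have "e x - e (1/2) \<le> S * (x - 1/2)" by auto
      from mult_left_mono[OF this, of "2*x - 1"] False show ?thesis
        by (simp add: algebra_simps power2_eq_square)
    qed
  qed
  then show ?thesis by (simp add: diff_divide_distrib add_divide_distrib)
qed

lemma lemC:
  assumes c: "continuous_on {0..1::real} (e::real\<Rightarrow>real)"
    and m: "\<And>x y. 0 \<le> x \<Longrightarrow> x \<le> y \<Longrightarrow> y \<le> 1 \<Longrightarrow> L * (y - x) \<le> e y - e x"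
    and v: "v \<ge> 0" and uv: "u + v / 2 = -1"
  shows "u * integral {0..1} e + v * integral {0..1} (\<lambda>\<theta>. \<theta> * e \<theta>) + e 1 \<ge> L * (1/2 + v/12)"
proof -
  define t0 where "t0 = (if v = 0 then 1 else min 1 (-u/v))"
  have u: "u < 0" using uv v by linarith
  have t0: "0 \<le> t0" "t0 \<le> 1" using u v by (auto simp: t0_def divide_nonpos_nonneg)
  have sgn1: "u + v * x \<le> 0" if "0 \<le> x" "x \<le> t0" for x
  proof (cases "v = 0")
    case True then show ?thesis using u by simp
  next
    case False
    then have "x \<le> -u/v" using that by (auto simp: t0_def)
    then have "v * x \<le> -u" using v False by (simp add: field_simps)
    then show ?thesis by simp
  qed
  have sgn2: "u + v * x \<ge> 0" if "t0 < x" "x \<le> 1" for x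
  proof (cases "v = 0 \<or> 1 \<le> -u/v")
    case True then have "t0 = 1" by (auto simp: t0_def)
    then show ?thesis using that by simp
  next
    case False
    then have "t0 = -u/v" "v > 0" using v by (auto simp: t0_def)
    then have "-u/v \<le> x" using that by simp
    then have "-u \<le> v * x" using \<open>v > 0\<close> by (simp add: field_simps)
    then show ?thesis by simp
  qed
  define e0 where "e0 = e t0"
  have "u * (e0 - L*t0) + (v * (e0 - L*t0) + L * u) / 2 + (L * v) / 3 \<le>
        u * integral {0..1} e + v * integral {0..1} (\<lambda>\<theta>. \<theta> * e \<theta>)"
  proof (rule has_integral_le[OF poly_int int_lin[OF c]])
    fix x :: real assume x: "x \<in> {0..1}"
    have "(u + v * x) * (e0 + L * (x - t0)) \<le> (u + v * x) * e x"
    proof (cases "x \<le> t0")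
      case True
      with x t0 m[of x t0] have "e x \<le> e0 + L * (x - t0)" by (auto simp: e0_def algebra_simps)
      from mult_left_mono_neg[OF this sgn1[of x]] True x show ?thesis by auto
    next
      case False
      with x t0 m[of t0 x] have "e0 + L * (x - t0) \<le> e x" by (auto simp: e0_def algebra_simps)
      from mult_left_mono[OF this sgn2[of x]] False x show ?thesis by auto
    qed
    then show "u * (e0 - L * t0) + (v * (e0 - L * t0) + L * u) * x + L * v * x\<^sup>2 \<le> u * e x + v * (x * e x)"
      by (simp add: algebra_simps power2_eq_square)
  qed
  moreover have "L * (1 - t0) \<le> e 1 - e0" using m[of t0 1] t0 by (simp add: e0_def)
  moreover have "u * (e0 - L*t0) + (v * (e0 - L*t0) + L * u) / 2 + (L * v) / 3
      = -(e0 - L*t0) + L * (u/2 + v/3)"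
  proof -
    have "u * (e0 - L*t0) + (v * (e0 - L*t0) + L * u) / 2 + (L * v) / 3
      = (e0 - L*t0) * (u + v/2) + L * (u/2 + v/3)" by (simp add: field_simps)
    then show ?thesis using uv by simp
  qed
  moreover have "L * (u/2 + v/3) = L * (-1/2 + v/12)"
  proof -
    have "u/2 + v/3 = -1/2 + v/12" using uv by linarith
    then show ?thesis by simp
  qed
  ultimately show ?thesis by (simp add: algebra_simps)
qed

definition EE :: "real \<Rightarrow> real \<Rightarrow> real \<Rightarrow> real \<Rightarrow> real" where
  "EE \<alpha> Z \<tau> \<theta> = (Z - \<theta> * \<tau>) powr (- \<alpha>)"

lemma EE_deriv:
  assumes "Z - x * \<tau> > 0"
  shows "(EE \<alpha> Z \<tau> has_real_derivative (\<alpha> * \<tau> * (Z - x * \<tau>) powr (- \<alpha> - 1))) (at x)"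
  unfolding EE_def
  apply (rule derivative_eq_intros refl | use assms in simp)+
  done


lemma EE_cont:
  assumes "\<tau> > 0" "Z - \<tau> > 0"
  shows "continuous_on {0..1} (EE \<alpha> Z \<tau>)"
proof (rule DERIV_continuous_on)
  fix x :: real assume "x \<in> {0..1}"
  then have "x * \<tau> \<le> \<tau>" using assms by (simp add: mult_le_cancel_right1)
  then have "Z - x * \<tau> > 0" using assms by linarith
  from EE_deriv[OF this] show "(EE \<alpha> Z \<tau> has_field_derivative (\<alpha> * \<tau> * (Z - x * \<tau>) powr (- \<alpha> - 1))) (at x within {0..1})"
    by (rule has_field_derivative_at_within)
qed

lemma EE_mvt:
  assumes "\<tau> > 0" "Z - \<tau> > 0" "0 \<le> x" "x \<le> y" "y \<le> 1"
  shows "\<exists>\<xi>. Z - \<tau> \<le> \<xi> \<and> \<xi> \<le> Z \<and> EE \<alpha> Z \<tau> y - EE \<alpha> Z \<tau> x = \<alpha> * \<tau> * (y - x) * \<xi> powr (- \<alpha> - 1)"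
proof (cases "x = y")
  case True then show ?thesis using assms by (intro exI[of _ Z]) auto
next
  case False
  then have "x < y" using assms by simp
  have "\<exists>z. x < z \<and> z < y \<and> EE \<alpha> Z \<tau> y - EE \<alpha> Z \<tau> x = (y - x) * (\<alpha> * \<tau> * (Z - z * \<tau>) powr (- \<alpha> - 1))"
  proof (rule MVT2[OF \<open>x < y\<close>])
    fix z assume "x \<le> z" "z \<le> y"
    then have "z * \<tau> \<le> \<tau>" using assms by (simp add: mult_le_cancel_right1)
    then have "Z - z * \<tau> > 0" using assms by linarith
    from EE_deriv[OF this] show "DERIV (EE \<alpha> Z \<tau>) z :> \<alpha> * \<tau> * (Z - z * \<tau>) powr (- \<alpha> - 1)" .
  qed
  then obtain z where z: "x < z" "z < y" "EE \<alpha> Z \<tau> y - EE \<alpha> Z \<tau> x = (y - x) * (\<alpha> * \<tau> * (Z - z * \<tau>) powr (- \<alpha> - 1))" by blast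
  have "z * \<tau> \<le> \<tau>" "0 \<le> z * \<tau>" using z assms by (simp_all add: mult_le_cancel_right1)
  then show ?thesis using z by (intro exI[of _ "Z - z * \<tau>"]) (auto simp: algebra_simps)
qed

lemma EE_lower:
  assumes "\<alpha> > 0" "\<tau> > 0" "Z - \<tau> > 0" "Z \<le> Zs" "0 \<le> x" "x \<le> y" "y \<le> 1"
  shows "\<alpha> * \<tau> * Zs powr (- \<alpha> - 1) * (y - x) \<le> EE \<alpha> Z \<tau> y - EE \<alpha> Z \<tau> x"
proof -
  obtain \<xi> where xi: "Z - \<tau> \<le> \<xi>" "\<xi> \<le> Z" "EE \<alpha> Z \<tau> y - EE \<alpha> Z \<tau> x = \<alpha> * \<tau> * (y - x) * \<xi> powr (- \<alpha> - 1)"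
    using EE_mvt[OF assms(2,3,5,6,7)] by blast
  have "Zs powr (- \<alpha> - 1) \<le> \<xi> powr (- \<alpha> - 1)"
    by (rule powr_mono2') (use assms xi in auto)
  then have "\<alpha> * \<tau> * (y - x) * Zs powr (- \<alpha> - 1) \<le> \<alpha> * \<tau> * (y - x) * \<xi> powr (- \<alpha> - 1)"
    by (rule mult_left_mono) (use assms in auto)
  then show ?thesis using xi by (simp add: algebra_simps)
qed

lemma EE_upper:
  assumes "\<alpha> > 0" "\<tau> > 0" "Z - \<tau> > 0" "0 < Zs" "Zs \<le> Z - \<tau>" "0 \<le> x" "x \<le> y" "y \<le> 1"
  shows "EE \<alpha> Z \<tau> y - EE \<alpha> Z \<tau> x \<le> \<alpha> * \<tau> * Zs powr (- \<alpha> - 1) * (y - x)"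
proof -
  obtain \<xi> where xi: "Z - \<tau> \<le> \<xi>" "\<xi> \<le> Z" "EE \<alpha> Z \<tau> y - EE \<alpha> Z \<tau> x = \<alpha> * \<tau> * (y - x) * \<xi> powr (- \<alpha> - 1)"
    using EE_mvt[OF assms(2,3,6,7,8)] by blast
  have "\<xi> powr (- \<alpha> - 1) \<le> Zs powr (- \<alpha> - 1)"
    by (rule powr_mono2') (use assms xi in auto)
  then have "\<alpha> * \<tau> * (y - x) * \<xi> powr (- \<alpha> - 1) \<le> \<alpha> * \<tau> * (y - x) * Zs powr (- \<alpha> - 1)"
    by (rule mult_left_mono) (use assms in auto)
  then show ?thesis using xi by (simp add: algebra_simps)
qed

lemma PW_deriv:
  assumes "Z - x * \<tau> > 0"
  shows "((\<lambda>\<theta>. (Z - \<theta> * \<tau>) powr r) has_real_derivative (- r * \<tau> * (Z - x * \<tau>) powr (r - 1))) (at x)"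
  apply (rule derivative_eq_intros refl | use assms in simp)+
  done

lemma EE_int:
  assumes "\<alpha> < 1" "\<tau> > 0" "Z - \<tau> > 0"
  shows "(EE \<alpha> Z \<tau> has_integral (Z powr (1 - \<alpha>) - (Z - \<tau>) powr (1 - \<alpha>)) / ((1 - \<alpha>) * \<tau>)) {0..1}"
proof -
  define c where "c = - 1 / ((1 - \<alpha>) * \<tau>)"
  define F where "F = (\<lambda>\<theta>. c * (Z - \<theta> * \<tau>) powr (1 - \<alpha>))"
  have "(EE \<alpha> Z \<tau> has_integral (F 1 - F 0)) {0..1}"
  proof (rule fundamental_theorem_of_calculus)
    fix x :: real assume "x \<in> {0..1}"
    then have "x * \<tau> \<le> \<tau>" using assms by (simp add: mult_le_cancel_right1)
    then have pos: "Z - x * \<tau> > 0" using assms by linarith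
    have "(F has_real_derivative c * (- (1 - \<alpha>) * \<tau> * (Z - x * \<tau>) powr (1 - \<alpha> - 1))) (at x)"
      unfolding F_def by (intro DERIV_cmult PW_deriv pos)
    moreover have "c * (- (1 - \<alpha>) * \<tau> * (Z - x * \<tau>) powr (1 - \<alpha> - 1)) = EE \<alpha> Z \<tau> x"
    proof -
      have "1 - \<alpha> \<noteq> 0" using assms by simp
      then show ?thesis using assms by (simp add: c_def EE_def field_simps)
    qed
    ultimately show "(F has_vector_derivative EE \<alpha> Z \<tau> x) (at x within {0..1})"
      by (simp add: has_real_derivative_iff_has_vector_derivative has_vector_derivative_at_within)
  qed simp
  moreover have "F 1 - F 0 = (Z powr (1 - \<alpha>) - (Z - \<tau>) powr (1 - \<alpha>)) / ((1 - \<alpha>) * \<tau>)"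
    by (simp add: F_def c_def diff_divide_distrib)
  ultimately show ?thesis by simp
qed

lemma IBP:
  assumes "\<alpha> > 0" "\<tau> > 0" "Z - \<tau> > 0"
  shows "((\<lambda>s. (\<tau> + tn - s * \<tau>) * (1 - s) * (Z - s * \<tau>) powr (- \<alpha> - 1)) has_integral
     ((2*\<tau>+tn) * integral {0..1} (EE \<alpha> Z \<tau>) - 2*\<tau> * integral {0..1} (\<lambda>\<theta>. \<theta> * EE \<alpha> Z \<tau> \<theta>)
       - (\<tau>+tn) * Z powr (- \<alpha>)) / (\<alpha> * \<tau>)) {0..1}"
proof -
  define K where "K = (\<lambda>s. (\<tau> + tn - s * \<tau>) * (1 - s) * (Z - s * \<tau>) powr (- \<alpha> - 1))"
  define H where "H = (\<lambda>s. ((\<tau> + tn - s * \<tau>) * (1 - s)) * EE \<alpha> Z \<tau> s)"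
  have c: "continuous_on {0..1} (EE \<alpha> Z \<tau>)" using EE_cont assms by blast
  have "((\<lambda>s. \<alpha> * \<tau> * K s + ((- (2*\<tau>+tn)) * EE \<alpha> Z \<tau> s + (2*\<tau>) * (s * EE \<alpha> Z \<tau> s))) has_integral (H 1 - H 0)) {0..1}"
  proof (rule fundamental_theorem_of_calculus)
    fix x :: real assume "x \<in> {0..1}"
    then have "x * \<tau> \<le> \<tau>" using assms by (simp add: mult_le_cancel_right1)
    then have pos: "Z - x * \<tau> > 0" using assms by linarith
    have "(H has_real_derivative (- \<tau> * (1 - x) + (\<tau> + tn - x * \<tau>) * (-1)) * EE \<alpha> Z \<tau> x
           + ((\<tau> + tn - x * \<tau>) * (1 - x)) * (\<alpha> * \<tau> * (Z - x * \<tau>) powr (- \<alpha> - 1))) (at x)"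
      unfolding H_def
      by (rule derivative_eq_intros EE_deriv[OF pos] refl | simp)+
    moreover have "(- \<tau> * (1 - x) + (\<tau> + tn - x * \<tau>) * (-1)) * EE \<alpha> Z \<tau> x
           + ((\<tau> + tn - x * \<tau>) * (1 - x)) * (\<alpha> * \<tau> * (Z - x * \<tau>) powr (- \<alpha> - 1))
        = \<alpha> * \<tau> * K x + ((- (2*\<tau>+tn)) * EE \<alpha> Z \<tau> x + (2*\<tau>) * (x * EE \<alpha> Z \<tau> x))"
      by (simp add: K_def algebra_simps)
    ultimately show "(H has_vector_derivative \<alpha> * \<tau> * K x + ((- (2*\<tau>+tn)) * EE \<alpha> Z \<tau> x + (2*\<tau>) * (x * EE \<alpha> Z \<tau> x))) (at x within {0..1})"
      by (simp add: has_real_derivative_iff_has_vector_derivative has_vector_derivative_at_within)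
  qed simp
  moreover have "H 1 - H 0 = - (\<tau>+tn) * Z powr (- \<alpha>)" by (simp add: H_def EE_def algebra_simps)
  ultimately have h1: "((\<lambda>s. \<alpha> * \<tau> * K s + ((- (2*\<tau>+tn)) * EE \<alpha> Z \<tau> s + (2*\<tau>) * (s * EE \<alpha> Z \<tau> s))) has_integral (- (\<tau>+tn) * Z powr (- \<alpha>))) {0..1}"
    by simp
  note h2 = int_lin[OF c, of "- (2*\<tau>+tn)" "2*\<tau>"]
  have "((\<lambda>s. (\<alpha> * \<tau> * K s + ((- (2*\<tau>+tn)) * EE \<alpha> Z \<tau> s + (2*\<tau>) * (s * EE \<alpha> Z \<tau> s)))
        - ((- (2*\<tau>+tn)) * EE \<alpha> Z \<tau> s + (2*\<tau>) * (s * EE \<alpha> Z \<tau> s))) has_integral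
        (- (\<tau>+tn) * Z powr (- \<alpha>)) - (- (2*\<tau>+tn) * integral {0..1} (EE \<alpha> Z \<tau>) + 2*\<tau> * integral {0..1} (\<lambda>\<theta>. \<theta> * EE \<alpha> Z \<tau> \<theta>))) {0..1}"
    by (rule has_integral_diff[OF h1 h2])
  then have "((\<lambda>s. (\<alpha> * \<tau>) * K s) has_integral
        (- (\<tau>+tn) * Z powr (- \<alpha>)) - (- (2*\<tau>+tn) * integral {0..1} (EE \<alpha> Z \<tau>) + 2*\<tau> * integral {0..1} (\<lambda>\<theta>. \<theta> * EE \<alpha> Z \<tau> \<theta>))) {0..1}"
    by simp
  then have "(K has_integral
        ((- (\<tau>+tn) * Z powr (- \<alpha>)) - (- (2*\<tau>+tn) * integral {0..1} (EE \<alpha> Z \<tau>) + 2*\<tau> * integral {0..1} (\<lambda>\<theta>. \<theta> * EE \<alpha> Z \<tau> \<theta>))) / (\<alpha> * \<tau>)) {0..1}"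
    using has_integral_mult_right_iff[of "\<alpha> * \<tau>" K] assms by simp
  then show ?thesis unfolding K_def by (simp add: algebra_simps)
qed

lemma cub_mono:
  fixes r s :: real
  assumes "0 < r" "r < s"
  shows "r^2 * (1 + r) < s^2 * (1 + s)"
proof -
  have "r^2 < s^2" using assms by (simp add: power_strict_mono)
  moreover have "1 + r < 1 + s" using assms by simp
  ultimately show ?thesis using assms by (intro mult_strict_mono) auto
qed

lemma cub_mono_le:
  fixes r s :: real
  assumes "0 < r" "r \<le> s"
  shows "r^2 * (1 + r) \<le> s^2 * (1 + s)"
  using cub_mono[of r s] assms by (cases "r = s") auto

lemma eta_prop: "eta > 0 \<and> 1 - 3 * eta^2 * (1 + eta) = 0"
proof -
  have "\<exists>x. 0 \<le> x \<and> x \<le> 1 \<and> (\<lambda>r::real. 3 * r^2 * (1 + r)) x = 1"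
    by (rule IVT') (auto intro!: continuous_intros)
  then obtain x :: real where x: "0 \<le> x" "3 * x^2 * (1 + x) = 1" by auto
  have xp: "x > 0" using x by (cases "x = 0") auto
  have "x > 0 \<and> 1 - 3 * x^2 * (1 + x) = 0" using x xp by simp
  moreover have "r = x" if "r > 0 \<and> 1 - 3 * r^2 * (1 + r) = 0" for r
  proof (rule ccontr)
    assume "r \<noteq> x"
    then consider "r < x" | "x < r" by linarith
    then show False using cub_mono[of r x] cub_mono[of x r] that x xp by cases auto
  qed
  ultimately have "eta = x" unfolding eta_def by (rule the_equality)
  then show ?thesis using x xp by simp
qed

lemma eta_ge: "0 < r \<Longrightarrow> eta \<le> r \<Longrightarrow> 3 * r^2 * (1 + r) \<ge> 1"
  using cub_mono_le[of eta r] eta_prop by auto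

lemma eta_lt: "0 < r \<Longrightarrow> r < eta \<Longrightarrow> 3 * r^2 * (1 + r) < 1"
  using cub_mono[of r eta] eta_prop by auto

lemma rho_star_prop: "rho_star > 0"
proof -
  have "\<exists>x. 0 \<le> x \<and> x \<le> 1 \<and> (\<lambda>r::real. r * (1 + r) + 3 * r^2 * (1 + r)) x = 1"
    by (rule IVT') (auto intro!: continuous_intros)
  then obtain x :: real where x: "0 \<le> x" "x * (1 + x) + 3 * x^2 * (1 + x) = 1" by auto
  have xp: "x > 0" using x by (cases "x = 0") auto
  have "x > 0 \<and> x * (1 + x) = 1 - 3 * x^2 * (1 + x)" using x xp by simp
  moreover have "r = x" if "r > 0 \<and> r * (1 + r) = 1 - 3 * r^2 * (1 + r)" for r
  proof (rule ccontr)
    assume "r \<noteq> x"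
    then consider "r < x" | "x < r" by linarith
    then show False
    proof cases
      case 1
      have "r * (1 + r) < x * (1 + x)" using 1 that by (intro mult_strict_mono) auto
      then show False using cub_mono[of r x] 1 that x by auto
    next
      case 2
      have "x * (1 + x) < r * (1 + r)" using 2 xp by (intro mult_strict_mono) auto
      then show False using cub_mono[of x r] 2 that x xp by auto
    qed
  qed
  ultimately have "rho_star = x" unfolding rho_star_def by (rule the_equality)
  then show ?thesis using xp by simp
qed

lemma EE_pos_pt: "0 \<le> (\<theta>::real) \<Longrightarrow> \<theta> \<le> 1 \<Longrightarrow> \<tau> > 0 \<Longrightarrow> Z - \<tau> > 0 \<Longrightarrow> Z - \<theta> * \<tau> > 0"
proof -
  assume "0 \<le> \<theta>" "\<theta> \<le> 1" "\<tau> > 0" "Z - \<tau> > 0"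
  then have "\<theta> * \<tau> \<le> 1 * \<tau>" using mult_right_mono[of \<theta> 1 \<tau>] by simp
  then show ?thesis using \<open>Z - \<tau> > 0\<close> by linarith
qed

lemma a_repr_gen:
  assumes "\<tau> > 0" "tn > 0" "Z - \<tau> > 0"
  shows "integral {0..1} (\<lambda>\<theta>. (- 2 * \<tau> * (1 - \<theta>) - tn) / ((\<tau> + tn) * (Z - \<theta> * \<tau>) powr \<alpha>))
    = (-(2*\<tau>+tn)/(\<tau>+tn)) * integral {0..1} (EE \<alpha> Z \<tau>) + (2*\<tau>/(\<tau>+tn)) * integral {0..1} (\<lambda>\<theta>. \<theta> * EE \<alpha> Z \<tau> \<theta>)"
proof -
  have "integral {0..1} (\<lambda>\<theta>. (- 2 * \<tau> * (1 - \<theta>) - tn) / ((\<tau> + tn) * (Z - \<theta> * \<tau>) powr \<alpha>))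
     = integral {0..1} (\<lambda>\<theta>. (-(2*\<tau>+tn)/(\<tau>+tn)) * EE \<alpha> Z \<tau> \<theta> + (2*\<tau>/(\<tau>+tn)) * (\<theta> * EE \<alpha> Z \<tau> \<theta>))"
  proof (rule integral_cong)
    fix \<theta> :: real assume "\<theta> \<in> {0..1}"
    then have W: "Z - \<theta> * \<tau> > 0" using EE_pos_pt[of \<theta> \<tau> Z] assms by auto
    then have P: "(Z - \<theta> * \<tau>) powr \<alpha> > 0" by simp
    show "(- 2 * \<tau> * (1 - \<theta>) - tn) / ((\<tau> + tn) * (Z - \<theta> * \<tau>) powr \<alpha>) =
      (-(2*\<tau>+tn)/(\<tau>+tn)) * EE \<alpha> Z \<tau> \<theta> + (2*\<tau>/(\<tau>+tn)) * (\<theta> * EE \<alpha> Z \<tau> \<theta>)"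
      unfolding EE_def powr_minus using assms P by (simp add: divide_simps) (simp add: algebra_simps)
  qed
  also have "\<dots> = (-(2*\<tau>+tn)/(\<tau>+tn)) * integral {0..1} (EE \<alpha> Z \<tau>) + (2*\<tau>/(\<tau>+tn)) * integral {0..1} (\<lambda>\<theta>. \<theta> * EE \<alpha> Z \<tau> \<theta>)"
    by (rule integral_unique[OF int_lin[OF EE_cont[OF assms(1,3)]]])
  finally show ?thesis .
qed

lemma c_repr_gen:
  assumes "\<tau> > 0" "tn > 0" "Z - \<tau> > 0"
  shows "integral {0..1} (\<lambda>\<theta>. (\<tau> ^ 2 * (2 * \<theta> - 1)) / (tn * (\<tau> + tn) * (Z - \<theta> * \<tau>) powr \<alpha>))
    = (\<tau>^2/(tn*(\<tau>+tn))) * (2 * integral {0..1} (\<lambda>\<theta>. \<theta> * EE \<alpha> Z \<tau> \<theta>) - integral {0..1} (EE \<alpha> Z \<tau>))"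
proof -
  have "integral {0..1} (\<lambda>\<theta>. (\<tau> ^ 2 * (2 * \<theta> - 1)) / (tn * (\<tau> + tn) * (Z - \<theta> * \<tau>) powr \<alpha>))
     = integral {0..1} (\<lambda>\<theta>. (-(\<tau>^2/(tn*(\<tau>+tn)))) * EE \<alpha> Z \<tau> \<theta> + (2*(\<tau>^2/(tn*(\<tau>+tn)))) * (\<theta> * EE \<alpha> Z \<tau> \<theta>))"
  proof (rule integral_cong)
    fix \<theta> :: real assume "\<theta> \<in> {0..1}"
    then have W: "Z - \<theta> * \<tau> > 0" using EE_pos_pt[of \<theta> \<tau> Z] assms by auto
    then have P: "(Z - \<theta> * \<tau>) powr \<alpha> > 0" by simp
    show "(\<tau> ^ 2 * (2 * \<theta> - 1)) / (tn * (\<tau> + tn) * (Z - \<theta> * \<tau>) powr \<alpha>) =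
      (-(\<tau>^2/(tn*(\<tau>+tn)))) * EE \<alpha> Z \<tau> \<theta> + (2*(\<tau>^2/(tn*(\<tau>+tn)))) * (\<theta> * EE \<alpha> Z \<tau> \<theta>)"
      unfolding EE_def powr_minus using assms P by (simp add: divide_simps) (simp add: algebra_simps)
  qed
  also have "\<dots> = (-(\<tau>^2/(tn*(\<tau>+tn)))) * integral {0..1} (EE \<alpha> Z \<tau>) + (2*(\<tau>^2/(tn*(\<tau>+tn)))) * integral {0..1} (\<lambda>\<theta>. \<theta> * EE \<alpha> Z \<tau> \<theta>)"
    by (rule integral_unique[OF int_lin[OF EE_cont[OF assms(1,3)]]])
  finally show ?thesis by (simp add: algebra_simps)
qed

lemma EE_mono:
  assumes "\<alpha> > 0" "\<tau> > 0" "Z - \<tau> > 0" "0 \<le> x" "x \<le> y" "y \<le> 1"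
  shows "EE \<alpha> Z \<tau> x \<le> EE \<alpha> Z \<tau> y"
proof -
  have "Z > 0" using assms by linarith
  have "\<alpha> * \<tau> * Z powr (- \<alpha> - 1) * (y - x) \<ge> 0" using assms by simp
  with EE_lower[OF assms(1,2,3) order_refl assms(4,5,6)] show ?thesis by linarith
qed

lemma key_lower1:
  assumes "\<alpha> > 0" "\<tau> > 0" "tn > 0" "Z - \<tau> > 0" "Z \<le> Zs"
  shows "(\<tau>^2/(tn*(\<tau>+tn))) * (2 * integral {0..1} (\<lambda>\<theta>. \<theta> * EE \<alpha> Z \<tau> \<theta>) - integral {0..1} (EE \<alpha> Z \<tau>))
     + ((-(2*\<tau>+tn)/(\<tau>+tn)) * integral {0..1} (EE \<alpha> Z \<tau>) + (2*\<tau>/(\<tau>+tn)) * integral {0..1} (\<lambda>\<theta>. \<theta> * EE \<alpha> Z \<tau> \<theta>))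
     + (Z - \<tau>) powr (- \<alpha>) \<ge> \<alpha> * \<tau> * Zs powr (- \<alpha> - 1) * (1/2 + (2*\<tau>/tn)/12)"
proof -
  define \<kappa> where "\<kappa> = \<tau>^2/(tn*(\<tau>+tn))"
  define u where "u = -(2*\<tau>+tn)/(\<tau>+tn) - \<kappa>"
  define v where "v = 2*\<tau>/(\<tau>+tn) + 2*\<kappa>"
  have nz: "\<tau> + tn \<noteq> 0" "tn \<noteq> 0" using assms by auto
  have v: "v = 2*\<tau>/tn" using nz unfolding v_def \<kappa>_def by (simp add: divide_simps) (simp add: algebra_simps power2_eq_square)
  have uv: "u + v/2 = -1" using nz unfolding u_def v_def \<kappa>_def by (simp add: divide_simps) (simp add: algebra_simps power2_eq_square)
  have "u * integral {0..1} (EE \<alpha> Z \<tau>) + v * integral {0..1} (\<lambda>\<theta>. \<theta> * EE \<alpha> Z \<tau> \<theta>) + EE \<alpha> Z \<tau> 1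
        \<ge> (\<alpha> * \<tau> * Zs powr (- \<alpha> - 1)) * (1/2 + v/12)"
  proof (rule lemC[OF EE_cont[OF assms(2,4)]])
    fix x y :: real assume "0 \<le> x" "x \<le> y" "y \<le> 1"
    then show "\<alpha> * \<tau> * Zs powr (- \<alpha> - 1) * (y - x) \<le> EE \<alpha> Z \<tau> y - EE \<alpha> Z \<tau> x"
      using EE_lower[OF assms(1,2,4,5)] by blast
  next
    show "0 \<le> v" using v assms by simp
  qed (rule uv)
  then show ?thesis unfolding v[symmetric] by (simp add: EE_def u_def v_def \<kappa>_def algebra_simps)
qed

lemma key_lower0:
  assumes "\<alpha> > 0" "\<tau> > 0" "tn > 0" "Z - \<tau> > 0" "Z \<le> Zs"
  shows "((-(2*\<tau>+tn)/(\<tau>+tn)) * integral {0..1} (EE \<alpha> Z \<tau>) + (2*\<tau>/(\<tau>+tn)) * integral {0..1} (\<lambda>\<theta>. \<theta> * EE \<alpha> Z \<tau> \<theta>))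
     + (Z - \<tau>) powr (- \<alpha>) \<ge> \<alpha> * \<tau> * Zs powr (- \<alpha> - 1) * (1/2 + (2*\<tau>/(\<tau>+tn))/12)"
proof -
  define u where "u = -(2*\<tau>+tn)/(\<tau>+tn)"
  define v where "v = 2*\<tau>/(\<tau>+tn)"
  have nz: "\<tau> + tn \<noteq> 0" using assms by auto
  have uv: "u + v/2 = -1" using nz unfolding u_def v_def by (simp add: divide_simps) (simp add: algebra_simps)
  have "u * integral {0..1} (EE \<alpha> Z \<tau>) + v * integral {0..1} (\<lambda>\<theta>. \<theta> * EE \<alpha> Z \<tau> \<theta>) + EE \<alpha> Z \<tau> 1
        \<ge> (\<alpha> * \<tau> * Zs powr (- \<alpha> - 1)) * (1/2 + v/12)"
  proof (rule lemC[OF EE_cont[OF assms(2,4)]])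
    fix x y :: real assume "0 \<le> x" "x \<le> y" "y \<le> 1"
    then show "\<alpha> * \<tau> * Zs powr (- \<alpha> - 1) * (y - x) \<le> EE \<alpha> Z \<tau> y - EE \<alpha> Z \<tau> x"
      using EE_lower[OF assms(1,2,4,5)] by blast
  next
    show "0 \<le> v" using assms by (simp add: v_def)
  qed (rule uv)
  then show ?thesis by (simp add: EE_def u_def v_def)
qed

lemma c_upper:
  assumes "\<alpha> > 0" "\<tau> > 0" "tn > 0" "Z - \<tau> > 0"
  shows "(\<tau>^2/(tn*(\<tau>+tn))) * (2 * integral {0..1} (\<lambda>\<theta>. \<theta> * EE \<alpha> Z \<tau> \<theta>) - integral {0..1} (EE \<alpha> Z \<tau>))
    \<le> (\<tau>^2/(tn*(\<tau>+tn))) * (\<alpha> * \<tau> * (Z - \<tau>) powr (- \<alpha> - 1) / 6)"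
proof (rule mult_left_mono)
  show "2 * integral {0..1} (\<lambda>\<theta>. \<theta> * EE \<alpha> Z \<tau> \<theta>) - integral {0..1} (EE \<alpha> Z \<tau>) \<le> \<alpha> * \<tau> * (Z - \<tau>) powr (- \<alpha> - 1) / 6"
  proof (rule lemB[OF EE_cont[OF assms(2,4)]])
    fix x y :: real assume "0 \<le> x" "x \<le> y" "y \<le> 1"
    then show "EE \<alpha> Z \<tau> y - EE \<alpha> Z \<tau> x \<le> \<alpha> * \<tau> * (Z - \<tau>) powr (- \<alpha> - 1) * (y - x)"
      using EE_upper[OF assms(1,2,4,4) order_refl] by blast
  qed
qed (use assms in simp)

lemma c_nonneg:
  assumes "\<alpha> > 0" "\<tau> > 0" "tn > 0" "Z - \<tau> > 0"
  shows "(\<tau>^2/(tn*(\<tau>+tn))) * (2 * integral {0..1} (\<lambda>\<theta>. \<theta> * EE \<alpha> Z \<tau> \<theta>) - integral {0..1} (EE \<alpha> Z \<tau>)) \<ge> 0"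
proof (rule mult_nonneg_nonneg)
  show "2 * integral {0..1} (\<lambda>\<theta>. \<theta> * EE \<alpha> Z \<tau> \<theta>) - integral {0..1} (EE \<alpha> Z \<tau>) \<ge> 0"
    by (rule lemA[OF EE_cont[OF assms(2,4)]]) (use EE_mono[OF assms(1,2,4)] in blast)
qed (use assms in simp)

lemma a_Q1:
  assumes "\<alpha> > 0" "\<tau> > 0" "tn > 0" "Z - \<tau> > 0"
  shows "- ((-(2*\<tau>+tn)/(\<tau>+tn)) * integral {0..1} (EE \<alpha> Z \<tau>) + (2*\<tau>/(\<tau>+tn)) * integral {0..1} (\<lambda>\<theta>. \<theta> * EE \<alpha> Z \<tau> \<theta>))
    \<ge> (tn/(\<tau>+tn)) * integral {0..1} (EE \<alpha> Z \<tau>)"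
proof -
  have c: "continuous_on {0..1} (EE \<alpha> Z \<tau>)" by (rule EE_cont[OF assms(2,4)])
  have h: "((\<lambda>\<theta>. 1 * EE \<alpha> Z \<tau> \<theta> + (-1) * (\<theta> * EE \<alpha> Z \<tau> \<theta>)) has_integral
      (1 * integral {0..1} (EE \<alpha> Z \<tau>) + (-1) * integral {0..1} (\<lambda>\<theta>. \<theta> * EE \<alpha> Z \<tau> \<theta>))) {0..1}"
    by (rule int_lin[OF c])
  have z: "((\<lambda>\<theta>. 0) has_integral 0) {0..1::real}" by simp
  have "0 \<le> (1 * integral {0..1} (EE \<alpha> Z \<tau>) + (-1) * integral {0..1} (\<lambda>\<theta>. \<theta> * EE \<alpha> Z \<tau> \<theta>))"
  proof (rule has_integral_le[OF z h])
    fix \<theta> :: real assume th: "\<theta> \<in> {0..1}"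
    then have "Z - \<theta> * \<tau> > 0" using EE_pos_pt[of \<theta> \<tau> Z] assms by auto
    then have "EE \<alpha> Z \<tau> \<theta> \<ge> 0" by (simp add: EE_def)
    then show "0 \<le> 1 * EE \<alpha> Z \<tau> \<theta> + (-1) * (\<theta> * EE \<alpha> Z \<tau> \<theta>)" using th
      by (simp add: algebra_simps) (metis mult_left_le_one_le)
  qed
  then have "(2*\<tau>/(\<tau>+tn)) * (integral {0..1} (EE \<alpha> Z \<tau>) - integral {0..1} (\<lambda>\<theta>. \<theta> * EE \<alpha> Z \<tau> \<theta>)) \<ge> 0"
    using assms by simp
  moreover have "- ((-(2*\<tau>+tn)/(\<tau>+tn)) * integral {0..1} (EE \<alpha> Z \<tau>) + (2*\<tau>/(\<tau>+tn)) * integral {0..1} (\<lambda>\<theta>. \<theta> * EE \<alpha> Z \<tau> \<theta>))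
    - (tn/(\<tau>+tn)) * integral {0..1} (EE \<alpha> Z \<tau>) = (2*\<tau>/(\<tau>+tn)) * (integral {0..1} (EE \<alpha> Z \<tau>) - integral {0..1} (\<lambda>\<theta>. \<theta> * EE \<alpha> Z \<tau> \<theta>))"
  proof -
    have nz: "\<tau> + tn \<noteq> 0" using assms by auto
    then show ?thesis by (simp add: divide_simps) (simp add: algebra_simps)
  qed
  ultimately show ?thesis by linarith
qed

lemma s_int:
  fixes a b T \<alpha> :: real
  assumes "\<alpha> < 1" "a \<le> b" "b \<le> T" "a < T"
  shows "((\<lambda>s. (T - s) powr (- \<alpha>)) has_integral ((T - a) powr (1 - \<alpha>) - (T - b) powr (1 - \<alpha>)) / (1 - \<alpha>)) {a..b}"
proof -
  define F where "F = (\<lambda>s. (-1/(1-\<alpha>)) * (T - s) powr (1 - \<alpha>))"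
  have "((\<lambda>s. (T - s) powr (- \<alpha>)) has_integral (F b - F a)) {a..b}"
  proof (rule fundamental_theorem_of_calculus_interior[OF assms(2)])
    show "continuous_on {a..b} F" unfolding F_def
      by (intro continuous_intros continuous_on_powr') (use assms in auto)
  next
    fix x assume x: "x \<in> {a<..<b}"
    then have pos: "T - x * 1 > 0" using assms by auto
    have "(F has_real_derivative (-1/(1-\<alpha>)) * (- (1 - \<alpha>) * 1 * (T - x * 1) powr (1 - \<alpha> - 1))) (at x)"
      unfolding F_def using DERIV_cmult[OF PW_deriv[OF pos, of "1 - \<alpha>"], of "-1/(1-\<alpha>)"] by simp
    moreover have "(-1/(1-\<alpha>)) * (- (1 - \<alpha>) * 1 * (T - x * 1) powr (1 - \<alpha> - 1)) = (T - x) powr (- \<alpha>)"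
    proof -
      have "1 - \<alpha> \<noteq> 0" using assms by simp
      then show ?thesis by (simp add: field_simps)
    qed
    ultimately show "(F has_vector_derivative (T - x) powr (- \<alpha>)) (at x)"
      by (simp add: has_real_derivative_iff_has_vector_derivative)
  qed
  moreover have "F b - F a = ((T - a) powr (1 - \<alpha>) - (T - b) powr (1 - \<alpha>)) / (1 - \<alpha>)"
    by (simp add: F_def diff_divide_distrib)
  ultimately show ?thesis by simp
qed

lemma arith1:
  fixes a b c :: real
  assumes "a > 0" "b > 0" "c > 0"
    and h: "3 * (b/a)^2 * (1 + b/a) \<ge> 1 \<or> (1 - 3 * (b/a)^2 * (1 + b/a) > 0 \<and>
           c/b \<le> (b/a)^2 * (1 + b/a) / (1 - 3 * (b/a)^2 * (1 + b/a)))"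
  shows "(a^2/(b*(a+b))) * (a / 6) \<le> b * (1/2 + (2*b/c)/12)"
proof -
  define X where "X = (b/a)^2 * (1 + b/a)"
  have XY: "X * a^3 = b^2 * (a + b)" using assms unfolding X_def
    by (simp add: field_simps power2_eq_square power3_eq_cube)
  have main: "a^3 * c \<le> b^2 * (a + b) * (3 * c + b)"
  proof (cases "3 * X \<ge> 1")
    case True
    then have "a^3 \<le> 3 * (X * a^3)" using assms by (simp add: mult_le_cancel_right1)
    then have "a^3 * c \<le> 3 * (X * a^3) * c" using assms by (simp add: mult_right_mono)
    also have "\<dots> \<le> X * a^3 * (3 * c + b)" using assms XY by (simp add: algebra_simps)
    finally show ?thesis using XY by simp
  next
    case False
    with h have h2: "1 - 3 * X > 0" "c/b \<le> X / (1 - 3 * X)" unfolding X_def by (auto simp: mult.assoc)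
    then have "c/b * (1 - 3*X) \<le> X" by (simp add: pos_le_divide_eq)
    then have "c * (1 - 3*X) \<le> X * b" using assms by (simp add: field_simps)
    then have "c \<le> X * (3 * c + b)" by (simp add: algebra_simps)
    then have "c * a^3 \<le> X * (3 * c + b) * a^3" using assms by (simp add: mult_right_mono)
    also have "\<dots> = (X * a^3) * (3 * c + b)" by (simp add: algebra_simps)
    finally show ?thesis using XY by (simp add: algebra_simps)
  qed
  have "(a^2/(b*(a+b))) * (a / 6) = a^3 / (6 * b * (a + b))"
    by (simp add: power2_eq_square power3_eq_cube)
  also have "\<dots> \<le> b * (3 * c + b) / (6 * c)"
    using main assms by (simp add: divide_simps) (simp add: algebra_simps power2_eq_square power3_eq_cube)
  also have "\<dots> = b * (1/2 + (2*b/c)/12)" using assms by (simp add: field_simps)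
  finally show ?thesis .
qed

lemma arith0:
  fixes a b c :: real
  assumes "a > 0" "b > 0" "c > 0"
    and h: "3 * (b/a)^2 * (1 + b/a) \<ge> 1"
  shows "(a^2/(b*(a+b))) * (a / 6) \<le> b * (1/2 + (2*b/(b+c))/12)"
proof -
  define X where "X = (b/a)^2 * (1 + b/a)"
  have XY: "X * a^3 = b^2 * (a + b)" using assms unfolding X_def
    by (simp add: field_simps power2_eq_square power3_eq_cube)
  have main: "a^3 * (b + c) \<le> b^2 * (a + b) * (4 * b + 3 * c)"
  proof -
    have "a^3 \<le> 3 * (X * a^3)" using assms h by (simp add: X_def mult_le_cancel_right1)
    then have "a^3 * (b + c) \<le> 3 * (X * a^3) * (b + c)" using assms by (simp add: mult_right_mono)
    also have "\<dots> \<le> X * a^3 * (4 * b + 3 * c)" using assms XY by (simp add: algebra_simps)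
    finally show ?thesis using XY by simp
  qed
  have "(a^2/(b*(a+b))) * (a / 6) = a^3 / (6 * b * (a + b))"
    by (simp add: power2_eq_square power3_eq_cube)
  also have "\<dots> \<le> b * (4 * b + 3 * c) / (6 * (b + c))"
    using main assms by (simp add: divide_simps) (simp add: algebra_simps power2_eq_square power3_eq_cube)
  also have "\<dots> = b * (1/2 + (2*b/(b+c))/12)" using assms by (simp add: field_simps)
  finally show ?thesis .
qed

lemma sigma_bounds: "0 < \<alpha> \<Longrightarrow> \<alpha> < 1 \<Longrightarrow> 0 < sigma \<alpha> \<and> sigma \<alpha> < 1"
  by (simp add: sigma_def)

context
  fixes t :: "nat \<Rightarrow> real" and \<alpha> :: real
  assumes alpha: "0 < \<alpha>" "\<alpha> < 1" and mono: "strict_mono t"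
begin

lemma tau_pos: "1 \<le> j \<Longrightarrow> tau t j > 0"
  unfolding tau_def using strict_monoD[OF mono, of "j - 1" j] by simp

lemma t_le: "i \<le> j \<Longrightarrow> t i \<le> t j"
  using strict_mono_less_eq[OF mono] by simp

lemma sig: "0 < sigma \<alpha>" "sigma \<alpha> < 1"
  using sigma_bounds[OF alpha] by auto

lemma Zgap:
  assumes "1 \<le> i" "i + 1 \<le> k"
  shows "tstar t \<alpha> k - t (i - 1) - tau t i = tstar t \<alpha> k - t i"
    and "tstar t \<alpha> k - t i > 0"
proof -
  show "tstar t \<alpha> k - t (i - 1) - tau t i = tstar t \<alpha> k - t i" by (simp add: tau_def)
  have "t i \<le> t (k - 1)" using assms by (intro t_le) auto
  moreover have "sigma \<alpha> * tau t k > 0" using sig tau_pos[of k] assms by simp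
  ultimately show "tstar t \<alpha> k - t i > 0" by (simp add: tstar_def)
qed

lemma Zpos:
  assumes "1 \<le> i" "i + 1 \<le> k"
  shows "tstar t \<alpha> k - t (i - 1) - tau t i > 0"
  using Zgap[OF assms] by simp

abbreviation "ZZ k i \<equiv> tstar t \<alpha> k - t (i - 1)"

lemma a_repr:
  assumes "1 \<le> i" "i + 1 \<le> k"
  shows "coef_a t \<alpha> k i = (-(2*tau t i + tau t (i+1))/(tau t i + tau t (i+1))) * integral {0..1} (EE \<alpha> (ZZ k i) (tau t i))
     + (2*tau t i/(tau t i + tau t (i+1))) * integral {0..1} (\<lambda>\<theta>. \<theta> * EE \<alpha> (ZZ k i) (tau t i) \<theta>)"
  unfolding coef_a_def by (rule a_repr_gen) (use tau_pos Zpos assms in auto)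

lemma c_repr:
  assumes "1 \<le> i" "i + 1 \<le> k"
  shows "coef_c t \<alpha> k i = (tau t i^2/(tau t (i+1)*(tau t i + tau t (i+1)))) *
     (2 * integral {0..1} (\<lambda>\<theta>. \<theta> * EE \<alpha> (ZZ k i) (tau t i) \<theta>) - integral {0..1} (EE \<alpha> (ZZ k i) (tau t i)))"
  unfolding coef_c_def by (rule c_repr_gen) (use tau_pos Zpos assms in auto)

lemma c_nonneg_mesh:
  assumes "1 \<le> i" "i + 1 \<le> k"
  shows "coef_c t \<alpha> k i \<ge> 0"
  unfolding c_repr[OF assms] by (rule c_nonneg) (use alpha tau_pos Zpos assms in auto)

lemma c_upper_mesh:
  assumes "1 \<le> i" "i + 1 \<le> k"
  shows "coef_c t \<alpha> k i \<le> (tau t i^2/(tau t (i+1)*(tau t i + tau t (i+1)))) * (\<alpha> * tau t i * (tstar t \<alpha> k - t i) powr (- \<alpha> - 1) / 6)"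
  unfolding c_repr[OF assms] Zgap(1)[OF assms, symmetric]
  by (rule c_upper) (use alpha tau_pos Zpos assms in auto)

lemma key1_mesh:
  assumes "1 \<le> i" "i + 1 \<le> k"
  shows "coef_c t \<alpha> k i + coef_a t \<alpha> k i + (tstar t \<alpha> k - t i) powr (- \<alpha>) \<ge>
    \<alpha> * tau t i * (ZZ k i) powr (- \<alpha> - 1) * (1/2 + (2*tau t i/tau t (i+1))/12)"
  unfolding c_repr[OF assms] a_repr[OF assms] Zgap(1)[OF assms, symmetric]
  by (rule key_lower1) (use alpha tau_pos Zpos assms in auto)

lemma key0_mesh:
  assumes "1 \<le> i" "i + 1 \<le> k"
  shows "coef_a t \<alpha> k i + (tstar t \<alpha> k - t i) powr (- \<alpha>) \<ge>
    \<alpha> * tau t i * (ZZ k i) powr (- \<alpha> - 1) * (1/2 + (2*tau t i/(tau t i + tau t (i+1)))/12)"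
  unfolding a_repr[OF assms] Zgap(1)[OF assms, symmetric]
  by (rule key_lower0) (use alpha tau_pos Zpos assms in auto)

lemma aQ1_mesh:
  assumes "1 \<le> i" "i + 1 \<le> k"
  shows "- coef_a t \<alpha> k i \<ge> (tau t (i+1)/(tau t i + tau t (i+1))) *
     (((ZZ k i) powr (1 - \<alpha>) - (tstar t \<alpha> k - t i) powr (1 - \<alpha>)) / ((1 - \<alpha>) * tau t i))"
proof -
  have p: "tau t i > 0" "tau t (i+1) > 0" "ZZ k i - tau t i > 0"
    using tau_pos[of i] tau_pos[of "i+1"] Zpos[OF assms] assms by auto
  have "integral {0..1} (EE \<alpha> (ZZ k i) (tau t i)) = ((ZZ k i) powr (1 - \<alpha>) - (ZZ k i - tau t i) powr (1 - \<alpha>)) / ((1 - \<alpha>) * tau t i)"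
    by (rule integral_unique[OF EE_int[OF alpha(2) p(1) p(3)]])
  then have I0: "integral {0..1} (EE \<alpha> (ZZ k i) (tau t i)) = ((ZZ k i) powr (1 - \<alpha>) - (tstar t \<alpha> k - t i) powr (1 - \<alpha>)) / ((1 - \<alpha>) * tau t i)"
    unfolding Zgap(1)[OF assms] .
  show ?thesis
    unfolding a_repr[OF assms] I0[symmetric]
    by (rule a_Q1[OF alpha(1) p])
qed

lemma IBP_mesh:
  assumes "1 \<le> j" "j + 1 \<le> k"
  shows "- coef_a t \<alpha> k j = (ZZ k j) powr (- \<alpha>) +
     \<alpha> * tau t j / (tau t j + tau t (j + 1)) *
          integral {0..1} (\<lambda>s. (tau t j + tau t (j + 1) - s * tau t j) * (1 - s) *
             (tstar t \<alpha> k - t (j - 1) - s * tau t j) powr (- \<alpha> - 1))"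
proof -
  define \<tau> where "\<tau> = tau t j"
  define tn where "tn = tau t (j+1)"
  define Z where "Z = ZZ k j"
  have p: "\<tau> > 0" "tn > 0" "Z - \<tau> > 0" using tau_pos Zpos assms by (auto simp: \<tau>_def tn_def Z_def)
  have f1: "integral {0..1} (\<lambda>s. (\<tau> + tn - s * \<tau>) * (1 - s) * (Z - s * \<tau>) powr (- \<alpha> - 1)) =
     ((2*\<tau>+tn) * integral {0..1} (EE \<alpha> Z \<tau>) - 2*\<tau> * integral {0..1} (\<lambda>\<theta>. \<theta> * EE \<alpha> Z \<tau> \<theta>)
       - (\<tau>+tn) * Z powr (- \<alpha>)) / (\<alpha> * \<tau>)"
    by (rule integral_unique[OF IBP[OF alpha(1) p(1) p(3)]])
  have f2: "- coef_a t \<alpha> k j = (2*\<tau>+tn)/(\<tau>+tn) * integral {0..1} (EE \<alpha> Z \<tau>) - (2*\<tau>/(\<tau>+tn)) * integral {0..1} (\<lambda>\<theta>. \<theta> * EE \<alpha> Z \<tau> \<theta>)"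
    unfolding a_repr[OF assms] \<tau>_def[symmetric] tn_def[symmetric] Z_def[symmetric]
  proof -
    have "\<tau> + tn \<noteq> 0" using p by simp
    then show "- ((-(2*\<tau>+tn)/(\<tau>+tn)) * integral {0..1} (EE \<alpha> Z \<tau>) + (2*\<tau>/(\<tau>+tn)) * integral {0..1} (\<lambda>\<theta>. \<theta> * EE \<alpha> Z \<tau> \<theta>)) =
       (2*\<tau>+tn)/(\<tau>+tn) * integral {0..1} (EE \<alpha> Z \<tau>) - (2*\<tau>/(\<tau>+tn)) * integral {0..1} (\<lambda>\<theta>. \<theta> * EE \<alpha> Z \<tau> \<theta>)"
      by (simp add: divide_simps) (simp add: algebra_simps)
  qed
  define I0 where "I0 = integral {0..1} (EE \<alpha> Z \<tau>)"
  define I1 where "I1 = integral {0..1} (\<lambda>\<theta>. \<theta> * EE \<alpha> Z \<tau> \<theta>)"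
  define KI where "KI = integral {0..1} (\<lambda>s. (\<tau> + tn - s * \<tau>) * (1 - s) * (Z - s * \<tau>) powr (- \<alpha> - 1))"
  have g1: "KI = ((2*\<tau>+tn) * I0 - 2*\<tau> * I1 - (\<tau>+tn) * Z powr (- \<alpha>)) / (\<alpha> * \<tau>)"
    using f1 unfolding KI_def I0_def I1_def .
  have g2: "- coef_a t \<alpha> k j = (2*\<tau>+tn)/(\<tau>+tn) * I0 - (2*\<tau>/(\<tau>+tn)) * I1"
    using f2 unfolding I0_def I1_def .
  have main: "- coef_a t \<alpha> k j = Z powr (- \<alpha>) + \<alpha> * \<tau> / (\<tau> + tn) * KI"
  proof -
    have "\<tau> + tn \<noteq> 0" "\<alpha> \<noteq> 0" "\<tau> \<noteq> 0" using p alpha by auto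
    then show ?thesis unfolding g1 g2 by (simp add: divide_simps)
  qed
  show ?thesis using main by (simp add: \<tau>_def tn_def Z_def KI_def)
qed


lemma reorder1: "(x::real)*y*z*w = x*z*(y*w)" by simp
lemma reorder2: "(x::real)*(y*z*w/6) = y*w*(x*(z/6))" by simp

lemma Kc:
  assumes ratio: "\<And>k. 2 \<le> k \<Longrightarrow> rho t k > rho_star \<and> rho t (k + 1) > rho_star \<and>
        (rho t k < eta \<longrightarrow>
           rho t (k + 1) \<le> (rho t k)^2 * (1 + rho t k) / (1 - 3 * (rho t k)^2 * (1 + rho t k)))"
    and j: "2 \<le> j" "j \<le> k"
  shows "coef_c t \<alpha> k (j-1) + coef_a t \<alpha> k (j-1) + (tstar t \<alpha> k - t (j-1)) powr (-\<alpha>)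
     - (if 3 \<le> j then coef_c t \<alpha> k (j-2) else 0) \<ge> 0"
proof -
  define i where "i = j - 1"
  have i: "1 \<le> i" "i + 1 \<le> k" "j = i + 1" using j by (auto simp: i_def)
  define P where "P = (ZZ k i) powr (- \<alpha> - 1)"
  have P: "P \<ge> 0" by (simp add: P_def)
  have K: "coef_c t \<alpha> k i + coef_a t \<alpha> k i + (tstar t \<alpha> k - t i) powr (- \<alpha>) \<ge>
    \<alpha> * P * (tau t i * (1/2 + (2*tau t i/tau t (i+1))/12))"
  proof -
    have eq: "\<alpha> * tau t i * P * (1/2 + (2*tau t i/tau t (i+1))/12) = \<alpha> * P * (tau t i * (1/2 + (2*tau t i/tau t (i+1))/12))"
      by (rule reorder1)
    have K0: "\<alpha> * tau t i * P * (1/2 + (2*tau t i/tau t (i+1))/12) \<le> coef_c t \<alpha> k i + coef_a t \<alpha> k i + (tstar t \<alpha> k - t i) powr (- \<alpha>)"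
      using key1_mesh[OF i(1,2)] unfolding P_def .
    show ?thesis using K0 unfolding eq .
  qed
  have pos: "tau t i * (1/2 + (2*tau t i/tau t (i+1))/12) \<ge> 0"
    using tau_pos[of i] tau_pos[of "i+1"] i by simp
  show ?thesis
  proof (cases "3 \<le> j")
    case False
    have "\<alpha> * P * (tau t i * (1/2 + (2*tau t i/tau t (i+1))/12)) \<ge> 0"
      using alpha P pos by simp
    moreover have "j - 1 = i" using i by auto
    ultimately show ?thesis using K False by simp
  next
    case True
    then have i2: "2 \<le> i" "1 \<le> i - 1" "i - 1 + 1 \<le> k" using i by auto
    have ii: "i - 1 + 1 = i" using i by simp
    have CU: "coef_c t \<alpha> k (i - 1) \<le> \<alpha> * P * ((tau t (i-1)^2/(tau t i*(tau t (i-1) + tau t i))) * (tau t (i-1) / 6))"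
    proof -
      have eq: "(tau t (i-1)^2/(tau t i*(tau t (i-1) + tau t i))) * (\<alpha> * tau t (i-1) * P / 6)
         = \<alpha> * P * ((tau t (i-1)^2/(tau t i*(tau t (i-1) + tau t i))) * (tau t (i-1) / 6))"
        by (rule reorder2)
      have C0: "coef_c t \<alpha> k (i - 1) \<le> (tau t (i-1)^2/(tau t i*(tau t (i-1) + tau t i))) * (\<alpha> * tau t (i-1) * P / 6)"
        using c_upper_mesh[OF i2(2,3)] unfolding ii P_def by simp
      show ?thesis using C0 unfolding eq .
    qed
    have a: "tau t (i-1) > 0" "tau t i > 0" "tau t (i+1) > 0" using tau_pos i2 by auto
    have r: "rho t i = tau t i / tau t (i-1)" "rho t (i+1) = tau t (i+1) / tau t i"
      by (simp_all add: rho_def)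
    have rpos: "rho t i > 0" using a r by simp
    have hyp: "3 * (tau t i / tau t (i-1))^2 * (1 + tau t i / tau t (i-1)) \<ge> 1 \<or>
       (1 - 3 * (tau t i / tau t (i-1))^2 * (1 + tau t i / tau t (i-1)) > 0 \<and>
        tau t (i+1) / tau t i \<le> (tau t i / tau t (i-1))^2 * (1 + tau t i / tau t (i-1)) /
          (1 - 3 * (tau t i / tau t (i-1))^2 * (1 + tau t i / tau t (i-1))))"
    proof (cases "rho t i < eta")
      case True
      then have "1 - 3 * (rho t i)^2 * (1 + rho t i) > 0" using eta_lt[OF rpos] by simp
      moreover have "rho t (i + 1) \<le> (rho t i)^2 * (1 + rho t i) / (1 - 3 * (rho t i)^2 * (1 + rho t i))"
        using ratio[OF i2(1)] True by blast
      ultimately show ?thesis unfolding r by blast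
    next
      case False
      then show ?thesis using eta_ge[OF rpos] unfolding r by simp
    qed
    note AR = arith1[OF a hyp]
    have "\<alpha> * P * ((tau t (i-1)^2/(tau t i*(tau t (i-1) + tau t i))) * (tau t (i-1) / 6))
        \<le> \<alpha> * P * (tau t i * (1/2 + (2*tau t i/tau t (i+1))/12))"
      by (rule mult_left_mono[OF AR]) (use alpha P in simp)
    moreover have "j - 1 = i" "j - 2 = i - 1" using i by auto
    ultimately show ?thesis using K CU True by simp
  qed
qed


lemma K0:
  assumes etah: "\<And>k. 2 \<le> k \<Longrightarrow> rho t k \<ge> eta"
    and j: "2 \<le> j" "j \<le> k"
  shows "coef_a t \<alpha> k (j-1) + (tstar t \<alpha> k - t (j-1)) powr (-\<alpha>)
     - (if 3 \<le> j then coef_c t \<alpha> k (j-2) else 0) \<ge> 0"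
proof -
  define i where "i = j - 1"
  have i: "1 \<le> i" "i + 1 \<le> k" "j = i + 1" using j by (auto simp: i_def)
  define P where "P = (ZZ k i) powr (- \<alpha> - 1)"
  have P: "P \<ge> 0" by (simp add: P_def)
  have K: "coef_a t \<alpha> k i + (tstar t \<alpha> k - t i) powr (- \<alpha>) \<ge>
    \<alpha> * P * (tau t i * (1/2 + (2*tau t i/(tau t i + tau t (i+1)))/12))"
  proof -
    have eq: "\<alpha> * tau t i * P * (1/2 + (2*tau t i/(tau t i + tau t (i+1)))/12) = \<alpha> * P * (tau t i * (1/2 + (2*tau t i/(tau t i + tau t (i+1)))/12))"
      by (rule reorder1)
    have K0: "\<alpha> * tau t i * P * (1/2 + (2*tau t i/(tau t i + tau t (i+1)))/12) \<le> coef_a t \<alpha> k i + (tstar t \<alpha> k - t i) powr (- \<alpha>)"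
      using key0_mesh[OF i(1,2)] unfolding P_def .
    show ?thesis using K0 unfolding eq .
  qed
  have pos: "tau t i * (1/2 + (2*tau t i/(tau t i + tau t (i+1)))/12) \<ge> 0"
    using tau_pos[of i] tau_pos[of "i+1"] i by simp
  show ?thesis
  proof (cases "3 \<le> j")
    case False
    have "\<alpha> * P * (tau t i * (1/2 + (2*tau t i/(tau t i + tau t (i+1)))/12)) \<ge> 0"
      using alpha P pos by simp
    moreover have "j - 1 = i" using i by auto
    ultimately show ?thesis using K False by simp
  next
    case True
    then have i2: "2 \<le> i" "1 \<le> i - 1" "i - 1 + 1 \<le> k" using i by auto
    have ii: "i - 1 + 1 = i" using i by simp
    have CU: "coef_c t \<alpha> k (i - 1) \<le> \<alpha> * P * ((tau t (i-1)^2/(tau t i*(tau t (i-1) + tau t i))) * (tau t (i-1) / 6))"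
    proof -
      have eq: "(tau t (i-1)^2/(tau t i*(tau t (i-1) + tau t i))) * (\<alpha> * tau t (i-1) * P / 6)
         = \<alpha> * P * ((tau t (i-1)^2/(tau t i*(tau t (i-1) + tau t i))) * (tau t (i-1) / 6))"
        by (rule reorder2)
      have C0: "coef_c t \<alpha> k (i - 1) \<le> (tau t (i-1)^2/(tau t i*(tau t (i-1) + tau t i))) * (\<alpha> * tau t (i-1) * P / 6)"
        using c_upper_mesh[OF i2(2,3)] unfolding ii P_def by simp
      show ?thesis using C0 unfolding eq .
    qed
    have a: "tau t (i-1) > 0" "tau t i > 0" "tau t (i+1) > 0" using tau_pos i2 by auto
    have r: "rho t i = tau t i / tau t (i-1)" by (simp add: rho_def)
    have rpos: "rho t i > 0" using a r by simp
    have hyp: "3 * (tau t i / tau t (i-1))^2 * (1 + tau t i / tau t (i-1)) \<ge> 1"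
      using eta_ge[OF rpos etah[OF i2(1)]] unfolding r .
    note AR = arith0[OF a hyp]
    have "\<alpha> * P * ((tau t (i-1)^2/(tau t i*(tau t (i-1) + tau t i))) * (tau t (i-1) / 6))
        \<le> \<alpha> * P * (tau t i * (1/2 + (2*tau t i/(tau t i + tau t (i+1)))/12))"
      by (rule mult_left_mono[OF AR]) (use alpha P in simp)
    moreover have "j - 1 = i" "j - 2 = i - 1" using i by auto
    ultimately show ?thesis using K CU True by simp
  qed
qed

end

lemma M_low: "2 \<le> j \<Longrightarrow> j + 1 \<le> k \<Longrightarrow> Mmat t \<alpha> k j = coef_c t \<alpha> k (j-1) - coef_a t \<alpha> k j"
proof -
  assume a: "2 \<le> j" "j + 1 \<le> k"
  then have "j \<le> k - 1" "2 \<le> k" by auto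
  then show ?thesis using a by (simp add: Mmat_def coef_d_def)
qed

lemma M_prev: "2 \<le> j \<Longrightarrow> j \<le> k \<Longrightarrow> Mmat t \<alpha> k (j-1) = - coef_a t \<alpha> k (j-1) + (if 3 \<le> j then coef_c t \<alpha> k (j-2) else 0)"
proof -
  assume a: "2 \<le> j" "j \<le> k"
  show ?thesis
  proof (cases "j = 2")
    case True
    then have "j - 1 = 1" "\<not> 3 \<le> j" "2 \<le> k" using a by auto
    then show ?thesis by (simp add: Mmat_def)
  next
    case False
    then have h: "3 \<le> j" "j - 1 \<noteq> 1" "2 \<le> j - 1" "j - 1 \<le> k - 1" "2 \<le> k" "j - 1 - 1 = j - 2" "k \<noteq> 1" "j - 1 \<noteq> k"
      using a by auto
    have "Mmat t \<alpha> k (j-1) = coef_d t \<alpha> k (j-1)" unfolding Mmat_def using h by simp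
    then show ?thesis using h by (simp add: coef_d_def)
  qed
qed

lemma M_diag: "2 \<le> k \<Longrightarrow> Mmat t \<alpha> k k = coef_c t \<alpha> k (k-1) + sigma \<alpha> powr (1 - \<alpha>) / ((1 - \<alpha>) * tau t k powr \<alpha>)"
proof -
  assume a: "2 \<le> k"
  then have "\<not> k \<le> k - 1" by auto
  then show ?thesis using a by (simp add: Mmat_def)
qed

lemma M_11: "Mmat t \<alpha> 1 1 = sigma \<alpha> powr (1 - \<alpha>) / ((1 - \<alpha>) * tau t 1 powr \<alpha>)"
  by (simp add: Mmat_def)

lemma powr_id:
  fixes s \<tau> \<alpha> :: real
  assumes "s > 0" "\<tau> > 0" "\<alpha> < 1"
  shows "s powr (1 - \<alpha>) / ((1 - \<alpha>) * \<tau> powr \<alpha>) = s / (1 - \<alpha>) * (s * \<tau>) powr (- \<alpha>)"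
proof -
  have e1: "s powr (1 - \<alpha>) = s * s powr (- \<alpha>)"
  proof -
    have "s powr (1 + (- \<alpha>)) = s powr 1 * s powr (- \<alpha>)" by (rule powr_add)
    then show ?thesis using assms by simp
  qed
  have e2: "\<tau> powr \<alpha> = inverse (\<tau> powr (- \<alpha>))" by (simp add: powr_minus)
  have e3: "(s * \<tau>) powr (- \<alpha>) = s powr (- \<alpha>) * \<tau> powr (- \<alpha>)" using assms by (simp add: powr_mult)
  have p: "\<tau> powr (- \<alpha>) > 0" "1 - \<alpha> \<noteq> 0" using assms by auto
  have g: "\<And>A B c::real. B > 0 \<Longrightarrow> c \<noteq> 0 \<Longrightarrow> s * A / (c * inverse B) = s / c * (A * B)"
    by (simp add: field_simps)
  show ?thesis unfolding e1 e2 e3 by (rule g[OF p])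
qed

lemma powr_id2:
  fixes s \<tau> \<alpha> :: real
  assumes "s > 0" "\<tau> > 0"
  shows "(s * \<tau>) powr (1 - \<alpha>) = s * \<tau> * (s * \<tau>) powr (- \<alpha>)"
proof -
  have "(s * \<tau>) powr (1 + (- \<alpha>)) = (s * \<tau>) powr 1 * (s * \<tau>) powr (- \<alpha>)" by (rule powr_add)
  then show ?thesis using assms by simp
qed

theorem lemma2:
  fixes t :: "nat \<Rightarrow> real" and \<alpha> :: real
  assumes alpha: "0 < \<alpha>" "\<alpha> < 1"
    and t0: "t 0 = 0"
    and mono: "strict_mono t"
    and ratio: "\<And>k. 2 \<le> k \<Longrightarrow> rho t k > rho_star \<and> rho t (k + 1) > rho_star \<and>
        (rho t k < eta \<longrightarrow>
           rho t (k + 1) \<le> (rho t k)^2 * (1 + rho t k) / (1 - 3 * (rho t k)^2 * (1 + rho t k)))"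
  shows
    "(\<forall>k j. 1 \<le> j \<and> j \<le> k \<longrightarrow>
        Mmat t \<alpha> k j \<ge> rho_star / ((1 + rho_star) * tau t j) *
          integral {t (j - 1) .. min (t j) (tstar t \<alpha> k)} (\<lambda>s. (tstar t \<alpha> k - s) powr (- \<alpha>)))
     \<and> (\<forall>k j. 2 \<le> j \<and> j \<le> k - 1 \<longrightarrow>
        Mmat t \<alpha> k j - Mmat t \<alpha> k (j - 1) \<ge>
          \<alpha> * tau t j / (tau t j + tau t (j + 1)) *
          integral {0..1} (\<lambda>s. (tau t j + tau t (j + 1) - s * tau t j) * (1 - s) *
             (tstar t \<alpha> k - t (j - 1) - s * tau t j) powr (- \<alpha> - 1)))
     \<and> (\<forall>k. 2 \<le> k \<longrightarrow>
        Mmat t \<alpha> k k - Mmat t \<alpha> k (k - 1) \<ge> \<alpha> / (2 * (1 - \<alpha>) * (sigma \<alpha> * tau t k) powr \<alpha>))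
     \<and> ((\<forall>k. 2 \<le> k \<longrightarrow> rho t k \<ge> eta) \<longrightarrow>
        (\<forall>k. 2 \<le> k \<longrightarrow> (1 - \<alpha>) / sigma \<alpha> * Mmat t \<alpha> k k - Mmat t \<alpha> k (k - 1) \<ge> 0))"
proof -
  note tp = tau_pos[OF alpha mono]
  note sg = sig[OF alpha mono]
  have rs: "rho_star > 0" by (rule rho_star_prop)
  have Tk: "tstar t \<alpha> k - t (k - 1) = sigma \<alpha> * tau t k" for k by (simp add: tstar_def)
  show ?thesis
  proof (intro conjI allI impI)
  fix k j :: nat
  assume kj: "1 \<le> j \<and> j \<le> k"
  show "Mmat t \<alpha> k j \<ge> rho_star / ((1 + rho_star) * tau t j) *
          integral {t (j - 1) .. min (t j) (tstar t \<alpha> k)} (\<lambda>s. (tstar t \<alpha> k - s) powr (- \<alpha>))"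
  proof (cases "j = k")
    case True
    then have j1: "1 \<le> k" using kj by simp
    have tk: "tau t k > 0" using tp j1 by simp
    have "sigma \<alpha> * tau t k \<le> 1 * tau t k" using mult_right_mono[of "sigma \<alpha>" 1 "tau t k"] sg tk by simp
    then have Tlt: "tstar t \<alpha> k \<le> t k" by (simp add: tstar_def tau_def)
    have Tgt: "t (k - 1) < tstar t \<alpha> k" using sg tk by (simp add: tstar_def)
    define D where "D = (sigma \<alpha> * tau t k) powr (- \<alpha>)"
    have Dp: "D \<ge> 0" by (simp add: D_def)
    have e1: "sigma \<alpha> powr (1 - \<alpha>) / ((1 - \<alpha>) * tau t k powr \<alpha>) = sigma \<alpha> / (1 - \<alpha>) * D"
      unfolding D_def by (rule powr_id) (use sg tk alpha in auto)
    have mn: "min (t k) (tstar t \<alpha> k) = tstar t \<alpha> k" using Tlt by simp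
    have I: "integral {t (k - 1) .. tstar t \<alpha> k} (\<lambda>s. (tstar t \<alpha> k - s) powr (- \<alpha>))
       = ((tstar t \<alpha> k - t (k - 1)) powr (1 - \<alpha>) - (tstar t \<alpha> k - tstar t \<alpha> k) powr (1 - \<alpha>)) / (1 - \<alpha>)"
      by (rule integral_unique[OF s_int]) (use alpha Tgt in auto)
    also have "\<dots> = sigma \<alpha> * tau t k * D / (1 - \<alpha>)"
      unfolding Tk D_def using powr_id2[of "sigma \<alpha>" "tau t k" \<alpha>] sg tk by simp
    finally have I2: "integral {t (k - 1) .. tstar t \<alpha> k} (\<lambda>s. (tstar t \<alpha> k - s) powr (- \<alpha>)) = sigma \<alpha> * tau t k * D / (1 - \<alpha>)" .
    have R: "rho_star / ((1 + rho_star) * tau t k) * (sigma \<alpha> * tau t k * D / (1 - \<alpha>))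
        = (rho_star / (1 + rho_star)) * (sigma \<alpha> / (1 - \<alpha>) * D)"
    proof -
      have g: "\<And>r \<tau> s c D::real. \<tau> > 0 \<Longrightarrow> r > 0 \<Longrightarrow> c \<noteq> 0 \<Longrightarrow>
          r / ((1 + r) * \<tau>) * (s * \<tau> * D / c) = (r / (1 + r)) * (s / c * D)"
        by (simp add: divide_simps)
      show ?thesis by (rule g) (use tk rs alpha in auto)
    qed
    have "(rho_star / (1 + rho_star)) * (sigma \<alpha> / (1 - \<alpha>) * D) \<le> 1 * (sigma \<alpha> / (1 - \<alpha>) * D)"
      by (rule mult_right_mono) (use rs sg alpha Dp in auto)
    moreover have "sigma \<alpha> / (1 - \<alpha>) * D \<le> Mmat t \<alpha> k k"
    proof (cases "k = 1")
      case True
      then show ?thesis using M_11[of t \<alpha>] e1 by simp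
    next
      case False
      then have k2: "2 \<le> k" using j1 by simp
      have "coef_c t \<alpha> k (k-1) \<ge> 0" by (rule c_nonneg_mesh[OF alpha mono]) (use k2 in auto)
      then show ?thesis using M_diag[OF k2] e1 by simp
    qed
    ultimately show ?thesis using True I2 R mn by simp
  next
    case False
    then have j: "1 \<le> j" "j + 1 \<le> k" using kj by auto
    have tj: "tau t j > 0" "tau t (j+1) > 0" using tp j by auto
    have k1: "1 \<le> k" using j by simp
    have tk: "tau t k > 0" using tp k1 by simp
    have Tgt: "t (k - 1) < tstar t \<alpha> k" using sg tk by (simp add: tstar_def)
    have tjle: "t j \<le> t (k - 1)" using j by (intro t_le[OF alpha mono]) auto
    have tjj: "t (j - 1) \<le> t j" by (intro t_le[OF alpha mono]) auto
    have mn: "min (t j) (tstar t \<alpha> k) = t j" using tjle Tgt by simp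
    define J where "J = (tstar t \<alpha> k - t (j - 1)) powr (1 - \<alpha>) - (tstar t \<alpha> k - t j) powr (1 - \<alpha>)"
    have I: "integral {t (j - 1) .. t j} (\<lambda>s. (tstar t \<alpha> k - s) powr (- \<alpha>)) = J / (1 - \<alpha>)"
      unfolding J_def by (rule integral_unique[OF s_int]) (use alpha Tgt tjle tjj in auto)
    have Jp: "J \<ge> 0" unfolding J_def
      by (simp, rule powr_mono2) (use alpha Tgt tjle tjj in auto)
    define B where "B = J / ((1 - \<alpha>) * tau t j)"
    have Bp: "B \<ge> 0" using Jp alpha tj by (simp add: B_def)
    define A where "A = tau t (j+1) / (tau t j + tau t (j+1))"
    have aQ: "- coef_a t \<alpha> k j \<ge> A * B"
      using aQ1_mesh[OF alpha mono j] unfolding A_def B_def J_def by simp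
    have Mge: "Mmat t \<alpha> k j \<ge> - coef_a t \<alpha> k j"
    proof (cases "j = 1")
      case True
      have k2: "2 \<le> k" using j True by simp
      show ?thesis using M_prev[of 2 k t \<alpha>] k2 True by simp
    next
      case False
      then have j2: "2 \<le> j" using j by simp
      have "coef_c t \<alpha> k (j-1) \<ge> 0" by (rule c_nonneg_mesh[OF alpha mono]) (use j2 j in auto)
      then show ?thesis using M_low[OF j2 j(2)] by simp
    qed
    have rj: "rho t (j+1) > rho_star" using ratio[of "j+1"] j by simp
    then have "rho_star < tau t (j+1) / tau t j" by (simp add: rho_def)
    then have "rho_star * tau t j < tau t (j+1)" using tj by (simp add: pos_less_divide_eq)
    then have RA: "rho_star / (1 + rho_star) \<le> A"
      unfolding A_def using rs tj by (simp add: divide_simps) (simp add: algebra_simps)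
    have R: "rho_star / ((1 + rho_star) * tau t j) * (J / (1 - \<alpha>)) = (rho_star / (1 + rho_star)) * B"
      unfolding B_def by simp
    have "(rho_star / (1 + rho_star)) * B \<le> A * B" by (rule mult_right_mono[OF RA Bp])
    then show ?thesis using I R mn aQ Mge by simp
  qed
next
  fix k j :: nat
  assume kj: "2 \<le> j \<and> j \<le> k - 1"
  show "Mmat t \<alpha> k j - Mmat t \<alpha> k (j - 1) \<ge>
          \<alpha> * tau t j / (tau t j + tau t (j + 1)) *
          integral {0..1} (\<lambda>s. (tau t j + tau t (j + 1) - s * tau t j) * (1 - s) *
             (tstar t \<alpha> k - t (j - 1) - s * tau t j) powr (- \<alpha> - 1))"
  proof -
    have j: "2 \<le> j" "j + 1 \<le> k" "1 \<le> j" "j \<le> k" using kj by auto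
    have "Mmat t \<alpha> k j - Mmat t \<alpha> k (j - 1) =
      (coef_c t \<alpha> k (j-1) + coef_a t \<alpha> k (j-1) + (tstar t \<alpha> k - t (j-1)) powr (-\<alpha>)
        - (if 3 \<le> j then coef_c t \<alpha> k (j-2) else 0))
      + \<alpha> * tau t j / (tau t j + tau t (j + 1)) *
          integral {0..1} (\<lambda>s. (tau t j + tau t (j + 1) - s * tau t j) * (1 - s) *
             (tstar t \<alpha> k - t (j - 1) - s * tau t j) powr (- \<alpha> - 1))"
      using M_low[OF j(1,2)] M_prev[OF j(1,4)] IBP_mesh[OF alpha mono j(3,2)] by simp
    moreover have "coef_c t \<alpha> k (j-1) + coef_a t \<alpha> k (j-1) + (tstar t \<alpha> k - t (j-1)) powr (-\<alpha>)
        - (if 3 \<le> j then coef_c t \<alpha> k (j-2) else 0) \<ge> 0"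
      by (rule Kc[OF alpha mono ratio j(1,4)])
    ultimately show ?thesis by linarith
  qed
next
  fix k :: nat
  assume k: "2 \<le> k"
  show "Mmat t \<alpha> k k - Mmat t \<alpha> k (k - 1) \<ge> \<alpha> / (2 * (1 - \<alpha>) * (sigma \<alpha> * tau t k) powr \<alpha>)"
  proof -
    have tk: "tau t k > 0" using tp k by simp
    define D where "D = (sigma \<alpha> * tau t k) powr (- \<alpha>)"
    define X where "X = (sigma \<alpha> * tau t k) powr \<alpha>"
    have DX: "D = inverse X" by (simp add: D_def X_def powr_minus)
    have Xp: "X > 0" using sg tk by (simp add: X_def)
    have e1: "sigma \<alpha> powr (1 - \<alpha>) / ((1 - \<alpha>) * tau t k powr \<alpha>) = sigma \<alpha> / (1 - \<alpha>) * D"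
      unfolding D_def by (rule powr_id) (use sg tk alpha in auto)
    have e2: "\<alpha> / (2 * (1 - \<alpha>) * (sigma \<alpha> * tau t k) powr \<alpha>) = \<alpha> / (2 * (1 - \<alpha>)) * D"
      unfolding X_def[symmetric] DX using Xp by (simp add: divide_inverse)
    have e3: "sigma \<alpha> / (1 - \<alpha>) * D - \<alpha> / (2 * (1 - \<alpha>)) * D = D"
    proof -
      have nz: "2 * (1 - \<alpha>) \<noteq> 0" using alpha by simp
      have a1: "\<alpha> / (2 * (1 - \<alpha>)) = (\<alpha> / 2) / (1 - \<alpha>)" by simp
      have "sigma \<alpha> / (1 - \<alpha>) - \<alpha> / (2 * (1 - \<alpha>)) = (sigma \<alpha> - \<alpha> / 2) / (1 - \<alpha>)"
        unfolding a1 by (simp add: diff_divide_distrib)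
      also have "\<dots> = 1" using alpha by (simp add: sigma_def)
      finally have h: "sigma \<alpha> / (1 - \<alpha>) - \<alpha> / (2 * (1 - \<alpha>)) = 1" .
      have "sigma \<alpha> / (1 - \<alpha>) * D - \<alpha> / (2 * (1 - \<alpha>)) * D = (sigma \<alpha> / (1 - \<alpha>) - \<alpha> / (2 * (1 - \<alpha>))) * D"
        by (simp add: left_diff_distrib)
      then show ?thesis unfolding h by simp
    qed
    have KK: "coef_c t \<alpha> k (k-1) + coef_a t \<alpha> k (k-1) + D
        - (if 3 \<le> k then coef_c t \<alpha> k (k-2) else 0) \<ge> 0"
      using Kc[OF alpha mono ratio k order_refl] unfolding Tk D_def .
    show ?thesis using M_diag[OF k] M_prev[OF k order_refl] e1 e2 e3 KK by simp
  qed
next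
  fix k :: nat
  assume etah: "\<forall>k. 2 \<le> k \<longrightarrow> rho t k \<ge> eta" and k: "2 \<le> k"
  show "(1 - \<alpha>) / sigma \<alpha> * Mmat t \<alpha> k k - Mmat t \<alpha> k (k - 1) \<ge> 0"
  proof -
    have tk: "tau t k > 0" using tp k by simp
    define D where "D = (sigma \<alpha> * tau t k) powr (- \<alpha>)"
    have e1: "sigma \<alpha> powr (1 - \<alpha>) / ((1 - \<alpha>) * tau t k powr \<alpha>) = sigma \<alpha> / (1 - \<alpha>) * D"
      unfolding D_def by (rule powr_id) (use sg tk alpha in auto)
    have e4: "(1 - \<alpha>) / sigma \<alpha> * (coef_c t \<alpha> k (k-1) + sigma \<alpha> / (1 - \<alpha>) * D)
       = (1 - \<alpha>) / sigma \<alpha> * coef_c t \<alpha> k (k-1) + D"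
    proof -
      have "1 - \<alpha> \<noteq> 0" "sigma \<alpha> \<noteq> 0" using alpha sg by auto
      then show ?thesis by (simp add: field_simps)
    qed
    have KK: "coef_a t \<alpha> k (k-1) + D - (if 3 \<le> k then coef_c t \<alpha> k (k-2) else 0) \<ge> 0"
      using K0[OF alpha mono _ k order_refl] etah unfolding Tk D_def by blast
    have c0: "coef_c t \<alpha> k (k-1) \<ge> 0" by (rule c_nonneg_mesh[OF alpha mono]) (use k in auto)
    have "(1 - \<alpha>) / sigma \<alpha> \<ge> 0" using alpha sg by simp
    then have c1: "(1 - \<alpha>) / sigma \<alpha> * coef_c t \<alpha> k (k-1) \<ge> 0" using c0 by (rule mult_nonneg_nonneg)
    show ?thesis using M_diag[OF k] M_prev[OF k order_refl] e1 e4 KK c1 by simp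
  qed
qed
qed

end
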